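(* Let $G$ be a finitely generated non-abelian free group and let $X$ be a finite generating set of $G$. Then no positive cone of $G$ is a coarsely connected subset of the Cayley graph $\Gamma(G,X)$.
   Context: A positive cone of a group $G$ is a subsemigroup $P\subseteq G$ with $G=P\sqcup P^{-1}\sqcup\{1\}$. $G$ is given the word metric $d_X$ of $\Gamma(G,X)$. For $r\geq1$, an $r$-path is a finite sequence $g_0,\dots,g_n$ in $G$ with $d_X(g_i,g_{i+1})\le r$ for all $i$. A subset $S\subseteq G$ is coarsely connected if there exists $r\geq 1$ such that any two elements of $S$ are joined by an $r$-path all of whose terms lie in $S$ (equivalently, some $r$-neighbourhood of $S$ spans a connected subgraph). *)

theory Defs
  imports "HOL-Algebra.Algebra"
begin

text \<open>Words over an alphabet: a letter (True, x) stands for x, (False, x) for x inverse.\<close>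

definition word_eval :: "('a, 'b) monoid_scheme \<Rightarrow> (bool \<times> 'a) list \<Rightarrow> 'a" where
  "word_eval G w = foldr (\<lambda>(b, x) acc. (if b then x else inv\<^bsub>G\<^esub> x) \<otimes>\<^bsub>G\<^esub> acc) w \<one>\<^bsub>G\<^esub>"

definition word_over :: "'a set \<Rightarrow> (bool \<times> 'a) list \<Rightarrow> bool" where
  "word_over S w \<longleftrightarrow> (\<forall>l \<in> set w. snd l \<in> S)"

definition reduced_word :: "(bool \<times> 'a) list \<Rightarrow> bool" where
  "reduced_word w \<longleftrightarrow>
     (\<forall>i. Suc i < length w \<longrightarrow>
        \<not> (snd (w ! i) = snd (w ! Suc i) \<and> fst (w ! i) \<noteq> fst (w ! Suc i)))"

definition free_basis :: "('a, 'b) monoid_scheme \<Rightarrow> 'a set \<Rightarrow> bool" where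
  "free_basis G S \<longleftrightarrow> S \<subseteq> carrier G \<and> generate G S = carrier G \<and>
     (\<forall>w. word_over S w \<and> reduced_word w \<and> w \<noteq> [] \<longrightarrow> word_eval G w \<noteq> \<one>\<^bsub>G\<^esub>)"

definition free_group :: "('a, 'b) monoid_scheme \<Rightarrow> bool" where
  "free_group G \<longleftrightarrow> group G \<and> (\<exists>S. free_basis G S)"

definition finitely_generated :: "('a, 'b) monoid_scheme \<Rightarrow> bool" where
  "finitely_generated G \<longleftrightarrow> (\<exists>Y. finite Y \<and> Y \<subseteq> carrier G \<and> generate G Y = carrier G)"

text \<open>Word length with respect to Gen, and the word metric of the Cayley graph
  (edges g -- g x for x in Gen), d(g,h) = |g^-1 h|_X.\<close>
definition word_length :: "('a, 'b) monoid_scheme \<Rightarrow> 'a set \<Rightarrow> 'a \<Rightarrow> nat" where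
  "word_length G Gen g = (LEAST n. \<exists>w. length w = n \<and> word_over Gen w \<and> word_eval G w = g)"

definition word_dist :: "('a, 'b) monoid_scheme \<Rightarrow> 'a set \<Rightarrow> 'a \<Rightarrow> 'a \<Rightarrow> nat" where
  "word_dist G Gen g h = word_length G Gen (inv\<^bsub>G\<^esub> g \<otimes>\<^bsub>G\<^esub> h)"

definition positive_cone :: "('a, 'b) monoid_scheme \<Rightarrow> 'a set \<Rightarrow> bool" where
  "positive_cone G P \<longleftrightarrow> P \<subseteq> carrier G \<and>
     (\<forall>x \<in> P. \<forall>y \<in> P. x \<otimes>\<^bsub>G\<^esub> y \<in> P) \<and>
     carrier G = P \<union> (\<lambda>x. inv\<^bsub>G\<^esub> x) ` P \<union> {\<one>\<^bsub>G\<^esub>} \<and>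
     P \<inter> (\<lambda>x. inv\<^bsub>G\<^esub> x) ` P = {} \<and>
     \<one>\<^bsub>G\<^esub> \<notin> P \<and> \<one>\<^bsub>G\<^esub> \<notin> (\<lambda>x. inv\<^bsub>G\<^esub> x) ` P"

definition r_path_in :: "('a, 'b) monoid_scheme \<Rightarrow> 'a set \<Rightarrow> nat \<Rightarrow> 'a set \<Rightarrow> 'a \<Rightarrow> 'a \<Rightarrow> bool" where
  "r_path_in G Gen r S a b \<longleftrightarrow>
     (\<exists>ps. ps \<noteq> [] \<and> hd ps = a \<and> last ps = b \<and> set ps \<subseteq> S \<and>
        (\<forall>i. Suc i < length ps \<longrightarrow> word_dist G Gen (ps ! i) (ps ! Suc i) \<le> r))"

definition coarsely_connected :: "('a, 'b) monoid_scheme \<Rightarrow> 'a set \<Rightarrow> 'a set \<Rightarrow> bool" where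
  "coarsely_connected G Gen S \<longleftrightarrow>
     (\<exists>r::nat. r \<ge> 1 \<and> (\<forall>a \<in> S. \<forall>b \<in> S. r_path_in G Gen r S a b))"

end

theory Submission
  imports Defs
begin


definition canc :: "bool \<times> 'a \<Rightarrow> bool \<times> 'a \<Rightarrow> bool" where
  "canc a b \<longleftrightarrow> snd a = snd b \<and> fst a \<noteq> fst b"

fun red' :: "(bool \<times> 'a) list \<Rightarrow> bool" where
  "red' [] = True"
| "red' [a] = True"
| "red' (a # b # xs) = (\<not> canc a b \<and> red' (b # xs))"

lemma reduced_red': "reduced_word xs = red' xs"
proof (induction xs rule: red'.induct)
  case 1 then show ?case by (simp add: reduced_word_def)
next
  case (2 a) then show ?case by (simp add: reduced_word_def)
next
  case (3 a b xs)
  have "reduced_word (a#b#xs) \<longleftrightarrow> \<not> canc a b \<and> reduced_word (b#xs)"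
    unfolding reduced_word_def canc_def
  proof (intro iffI conjI allI impI)
    assume h: "\<forall>i. Suc i < length (a # b # xs) \<longrightarrow>
        \<not> (snd ((a # b # xs) ! i) = snd ((a # b # xs) ! Suc i) \<and> fst ((a # b # xs) ! i) \<noteq> fst ((a # b # xs) ! Suc i))"
    show "\<not> (snd a = snd b \<and> fst a \<noteq> fst b)" using h[rule_format, of 0] by simp
    fix i assume "Suc i < length (b # xs)"
    then show "\<not> (snd ((b # xs) ! i) = snd ((b # xs) ! Suc i) \<and> fst ((b # xs) ! i) \<noteq> fst ((b # xs) ! Suc i))"
      using h[rule_format, of "Suc i"] by simp
  next
    fix i
    assume h: "\<not> (snd a = snd b \<and> fst a \<noteq> fst b) \<and>
       (\<forall>i. Suc i < length (b # xs) \<longrightarrow>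
            \<not> (snd ((b # xs) ! i) = snd ((b # xs) ! Suc i) \<and> fst ((b # xs) ! i) \<noteq> fst ((b # xs) ! Suc i)))"
      and i: "Suc i < length (a # b # xs)"
    show "\<not> (snd ((a # b # xs) ! i) = snd ((a # b # xs) ! Suc i) \<and> fst ((a # b # xs) ! i) \<noteq> fst ((a # b # xs) ! Suc i))"
    proof (cases i)
      case 0 then show ?thesis using h by simp
    next
      case (Suc j) then show ?thesis using h i by auto
    qed
  qed
  then show ?case using 3 by simp
qed

lemma red'_Cons: "red' (a # ys) \<longleftrightarrow> red' ys \<and> (ys \<noteq> [] \<longrightarrow> \<not> canc a (hd ys))"
  by (cases ys) auto

lemma red'_append:
  "red' (xs @ ys) \<longleftrightarrow> red' xs \<and> red' ys \<and> (xs \<noteq> [] \<and> ys \<noteq> [] \<longrightarrow> \<not> canc (last xs) (hd ys))"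
  by (induction xs) (auto simp: red'_Cons)

definition flip :: "bool \<times> 'a \<Rightarrow> bool \<times> 'a" where
  "flip a = (\<not> fst a, snd a)"

definition winv :: "(bool \<times> 'a) list \<Rightarrow> (bool \<times> 'a) list" where
  "winv xs = rev (map flip xs)"

lemma winv_Nil[simp]: "winv [] = []" and winv_Cons[simp]: "winv (a # xs) = winv xs @ [flip a]"
  by (simp_all add: winv_def)

lemma winv_append[simp]: "winv (xs @ ys) = winv ys @ winv xs"
  by (simp add: winv_def)

lemma flip_flip[simp]: "flip (flip a) = a" by (simp add: flip_def)

lemma winv_winv[simp]: "winv (winv xs) = xs"
  by (simp add: winv_def rev_map comp_def)

lemma length_winv[simp]: "length (winv xs) = length xs" by (simp add: winv_def)

lemma winv_eq_Nil[simp]: "winv xs = [] \<longleftrightarrow> xs = []" by (simp add: winv_def)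

lemma canc_flip: "canc (flip b) (flip a) = canc a b"
  by (auto simp: canc_def flip_def)

lemma last_winv: "xs \<noteq> [] \<Longrightarrow> last (winv xs) = flip (hd xs)"
  by (cases xs) (auto simp: winv_def)

lemma red'_winv: "red' (winv xs) = red' xs"
proof (induction xs)
  case Nil then show ?case by simp
next
  case (Cons a xs)
  have "red' (winv (a#xs)) = (red' (winv xs) \<and> (xs \<noteq> [] \<longrightarrow> \<not> canc (flip (hd xs)) (flip a)))"
    by (simp only: winv_Cons red'_append) (auto simp: last_winv)
  then show ?case using Cons.IH by (simp add: canc_flip red'_Cons)
qed

lemma cancellation:
  assumes "red' Xw" "red' W"
  shows "\<exists>Xw' T W'. Xw = Xw' @ T \<and> W = winv T @ W' \<and> red' (Xw' @ W')"
  using assms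
proof (induction Xw arbitrary: W rule: rev_induct)
  case Nil then show ?case by (intro exI[of _ "[]"] exI[of _ "[]"] exI[of _ W]) auto
next
  case (snoc a X0)
  have r0: "red' X0" using snoc.prems by (simp add: red'_append)
  show ?case
  proof (cases W)
    case Nil then show ?thesis using snoc.prems by (intro exI[of _ "X0 @ [a]"] exI[of _ "[]"]) auto
  next
    case (Cons c W0)
    show ?thesis
    proof (cases "canc a c")
      case True
      have "red' W0" using snoc.prems Cons by (simp add: red'_Cons)
      then obtain Xw' T0 W' where h: "X0 = Xw' @ T0" "W0 = winv T0 @ W'" "red' (Xw' @ W')"
        using snoc.IH r0 by blast
      have "c = flip a" using True by (cases a, cases c) (auto simp: canc_def flip_def)
      then show ?thesis using h Cons by (intro exI[of _ Xw'] exI[of _ "T0 @ [a]"] exI[of _ W']) simp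
    next
      case False
      then show ?thesis using snoc.prems Cons
        by (intro exI[of _ "X0 @ [a]"] exI[of _ "[]"] exI[of _ W]) (simp add: red'_append)
    qed
  qed
qed

context group
begin

definition lev :: "bool \<times> 'a \<Rightarrow> 'a" where
  "lev a = (if fst a then snd a else inv (snd a))"

lemma eval_Nil[simp]: "word_eval G [] = \<one>"
  by (simp add: word_eval_def)

lemma eval_Cons[simp]: "word_eval G (a # w) = lev a \<otimes> word_eval G w"
  by (cases a) (simp add: word_eval_def lev_def)

lemma word_over_simps[simp]:
  "word_over A []" "word_over A (a # w) \<longleftrightarrow> snd a \<in> A \<and> word_over A w"
  "word_over A (xs @ ys) \<longleftrightarrow> word_over A xs \<and> word_over A ys"
  by (auto simp: word_over_def)

lemma word_over_mono: "word_over A w \<Longrightarrow> A \<subseteq> B \<Longrightarrow> word_over B w"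
  by (auto simp: word_over_def)

lemma lev_closed[simp]: "snd a \<in> carrier G \<Longrightarrow> lev a \<in> carrier G"
  by (simp add: lev_def)

lemma eval_closed[simp]: "word_over (carrier G) w \<Longrightarrow> word_eval G w \<in> carrier G"
  by (induction w) auto

lemma eval_append: "word_over (carrier G) xs \<Longrightarrow> word_over (carrier G) ys \<Longrightarrow>
   word_eval G (xs @ ys) = word_eval G xs \<otimes> word_eval G ys"
  by (induction xs) (auto simp: m_assoc)

lemma lev_flip: "snd a \<in> carrier G \<Longrightarrow> lev (flip a) = inv (lev a)"
  by (simp add: lev_def flip_def)

lemma word_over_winv[simp]: "word_over A (winv w) = word_over A w"
  by (auto simp: word_over_def winv_def flip_def)

lemma eval_winv: "word_over (carrier G) w \<Longrightarrow> word_eval G (winv w) = inv (word_eval G w)"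
proof (induction w)
  case Nil then show ?case by simp
next
  case (Cons a w)
  have "word_eval G (winv (a # w)) = word_eval G (winv w) \<otimes> lev (flip a)"
    using Cons.prems by (simp add: eval_append flip_def)
  also have "\<dots> = inv (word_eval G w) \<otimes> inv (lev a)" using Cons by (simp add: lev_flip)
  also have "\<dots> = inv (lev a \<otimes> word_eval G w)" using Cons.prems by (simp add: inv_mult_group)
  finally show ?case by simp
qed

lemma canc_lev: "canc a b \<Longrightarrow> snd a \<in> carrier G \<Longrightarrow> lev a \<otimes> lev b = \<one>"
  by (cases a, cases b) (auto simp: canc_def lev_def)

lemma words_exist:
  assumes "A \<subseteq> carrier G" "g \<in> generate G A"
  shows "\<exists>w. word_over A w \<and> word_eval G w = g"
  using assms(2)
proof (induction rule: generate.induct)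
  case one then show ?case by (intro exI[of _ "[]"]) simp
next
  case (incl h) then show ?case using assms(1) by (intro exI[of _ "[(True, h)]"]) (auto simp: lev_def)
next
  case (inv h) then show ?case using assms(1) by (intro exI[of _ "[(False, h)]"]) (auto simp: lev_def)
next
  case (eng h1 h2)
  then obtain w1 w2 where "word_over A w1" "word_eval G w1 = h1" "word_over A w2" "word_eval G w2 = h2"
    by blast
  moreover have "word_over (carrier G) w1" "word_over (carrier G) w2"
    using calculation assms(1) word_over_mono by blast+
  ultimately show ?case
    by (intro exI[of _ "w1 @ w2"]) (auto simp: eval_append)
qed

lemma reduce_word:
  assumes "A \<subseteq> carrier G" "word_over A Xw"
  shows "\<exists>Y. red' Y \<and> word_over A Y \<and> word_eval G Y = word_eval G Xw"
  using assms(2)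
proof (induction Xw)
  case Nil then show ?case by (intro exI[of _ "[]"]) simp
next
  case (Cons a X0)
  then obtain Y0 where Y0: "red' Y0" "word_over A Y0" "word_eval G Y0 = word_eval G X0" by auto
  have ac: "snd a \<in> carrier G" using Cons.prems assms(1) by auto
  show ?case
  proof (cases "Y0 \<noteq> [] \<and> canc a (hd Y0)")
    case True
    then obtain b Y1 where b: "Y0 = b # Y1" "canc a b" by (cases Y0) auto
    have Y1c: "word_over (carrier G) Y1" "snd b \<in> carrier G" using Y0(2) b assms(1)
      by (auto dest: word_over_mono)
    have "word_eval G (a # X0) = (lev a \<otimes> lev b) \<otimes> word_eval G Y1"
      using Y0 b ac Y1c by (simp add: m_assoc)
    also have "\<dots> = word_eval G Y1" using canc_lev[OF b(2) ac] Y1c by simp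
    finally show ?thesis using Y0 b by (intro exI[of _ Y1]) (auto simp: red'_Cons)
  next
    case False
    then show ?thesis using Y0 Cons.prems by (intro exI[of _ "a # Y0"]) (auto simp: red'_Cons)
  qed
qed

end



lemma hd_winv: "xs \<noteq> [] \<Longrightarrow> hd (winv xs) = flip (last xs)"
  by (induction xs) (auto simp: winv_def hd_rev last_map)

lemma first_exit:
  assumes "ps \<noteq> []" "hd ps \<in> A" "last ps \<notin> A"
  shows "\<exists>i. Suc i < length ps \<and> ps ! i \<in> A \<and> ps ! Suc i \<notin> A"
  using assms
proof (induction ps)
  case Nil then show ?case by simp
next
  case (Cons a ps)
  show ?case
  proof (cases "ps = []")
    case True then show ?thesis using Cons.prems by simp
  next
    case False
    show ?thesis
    proof (cases "hd ps \<in> A")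
      case True
      then obtain i where "Suc i < length ps" "ps ! i \<in> A" "ps ! Suc i \<notin> A"
        using Cons.IH False Cons.prems by auto
      then show ?thesis by (intro exI[of _ "Suc i"]) simp
    next
      case False
      then show ?thesis using Cons.prems \<open>ps \<noteq> []\<close>
        by (intro exI[of _ 0]) (auto simp: hd_conv_nth)
    qed
  qed
qed

context group
begin

lemma free_contra:
  assumes SC: "S \<subseteq> carrier G"
    and free: "\<forall>w. word_over S w \<and> reduced_word w \<and> w \<noteq> [] \<longrightarrow> word_eval G w \<noteq> \<one>"
    and r: "red' xs" "red' ys" and o: "word_over S xs" "word_over S ys"
    and e: "word_eval G xs = word_eval G ys"
    and hd: "xs \<noteq> [] \<and> ys \<noteq> [] \<longrightarrow> hd xs \<noteq> hd ys"
    and ne: "xs \<noteq> [] \<or> ys \<noteq> []"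
  shows False
proof -
  define Z where "Z = winv xs @ ys"
  have oc: "word_over (carrier G) xs" "word_over (carrier G) ys" using o SC word_over_mono by blast+
  have "red' Z" unfolding Z_def red'_append
  proof (intro conjI impI)
    show "red' (winv xs)" using r by (simp add: red'_winv)
    show "red' ys" by fact
    assume h: "winv xs \<noteq> [] \<and> ys \<noteq> []"
    then have "xs \<noteq> []" by simp
    then have l: "last (winv xs) = flip (hd xs)" by (rule last_winv)
    show "\<not> canc (last (winv xs)) (hd ys)"
      unfolding l using hd h \<open>xs \<noteq> []\<close>
      by (cases "hd xs", cases "hd ys") (auto simp: canc_def flip_def)
  qed
  moreover have "word_over S Z" using o by (simp add: Z_def)
  moreover have "Z \<noteq> []" using ne by (simp add: Z_def)
  moreover have "word_eval G Z = \<one>" using oc e by (simp add: Z_def eval_append eval_winv)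
  ultimately show False using free by (simp add: reduced_red')
qed

lemma unique_red:
  assumes SC: "S \<subseteq> carrier G"
    and free: "\<forall>w. word_over S w \<and> reduced_word w \<and> w \<noteq> [] \<longrightarrow> word_eval G w \<noteq> \<one>"
  shows "red' xs \<Longrightarrow> red' ys \<Longrightarrow> word_over S xs \<Longrightarrow> word_over S ys \<Longrightarrow>
    word_eval G xs = word_eval G ys \<Longrightarrow> xs = ys"
proof (induction xs arbitrary: ys)
  case Nil
  then show ?case using free_contra[OF SC free, of "[]" ys] by auto
next
  case (Cons a xs)
  show ?case
  proof (cases "ys \<noteq> [] \<and> hd ys = a")
    case True
    then obtain ys' where ys: "ys = a # ys'" by (cases ys) auto
    have c: "snd a \<in> carrier G" "word_over (carrier G) xs" "word_over (carrier G) ys'"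
      using Cons.prems ys SC word_over_mono by auto
    have "word_eval G xs = word_eval G ys'"
      using Cons.prems(5) ys c by simp
    then have "xs = ys'" using Cons.IH Cons.prems ys by (simp add: red'_Cons)
    then show ?thesis using ys by simp
  next
    case False
    then show ?thesis using free_contra[OF SC free, of "a # xs" ys] Cons.prems by auto
  qed
qed

lemma cone_props:
  assumes pc: "positive_cone G P"
  shows "P \<subseteq> carrier G" "\<And>x y. x \<in> P \<Longrightarrow> y \<in> P \<Longrightarrow> x \<otimes> y \<in> P"
    "\<And>x. x \<in> carrier G \<Longrightarrow> x \<noteq> \<one> \<Longrightarrow> x \<in> P \<or> inv x \<in> P"
    "\<And>x. x \<in> P \<Longrightarrow> inv x \<in> P \<Longrightarrow> False"
    "\<one> \<notin> P"
proof -
  show PC: "P \<subseteq> carrier G" using pc unfolding positive_cone_def by (elim conjE)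
  show M: "\<And>x y. x \<in> P \<Longrightarrow> y \<in> P \<Longrightarrow> x \<otimes> y \<in> P" using pc by (simp add: positive_cone_def)
  show O: "\<one> \<notin> P" using pc by (simp add: positive_cone_def)
  show "\<And>x. x \<in> carrier G \<Longrightarrow> x \<noteq> \<one> \<Longrightarrow> x \<in> P \<or> inv x \<in> P"
  proof -
    fix x assume x: "x \<in> carrier G" "x \<noteq> \<one>"
    then have "x \<in> P \<union> (\<lambda>x. inv x) ` P" using pc unfolding positive_cone_def by blast
    then show "x \<in> P \<or> inv x \<in> P" using PC by auto
  qed
  show "\<And>x. x \<in> P \<Longrightarrow> inv x \<in> P \<Longrightarrow> False"
  proof -
    fix x assume "x \<in> P" "inv x \<in> P"
    then have "x \<otimes> inv x \<in> P" by (rule M)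
    then show False using O PC \<open>x \<in> P\<close> by auto
  qed
qed

lemma cone_max:
  assumes pc: "positive_cone G P"
  shows "finite T \<Longrightarrow> T \<noteq> {} \<Longrightarrow> T \<subseteq> carrier G \<Longrightarrow> \<exists>M\<in>T. \<forall>t\<in>T. t = M \<or> inv t \<otimes> M \<in> P"
proof (induction T rule: finite_ne_induct)
  case (singleton x) then show ?case by simp
next
  case (insert x F)
  then obtain M where M: "M \<in> F" "\<forall>t\<in>F. t = M \<or> inv t \<otimes> M \<in> P" by auto
  have xc: "x \<in> carrier G" and Mc: "M \<in> carrier G" using insert M by auto
  show ?case
  proof (cases "x = M \<or> inv x \<otimes> M \<in> P")
    case True then show ?thesis using M by auto
  next
    case False
    then have "inv x \<otimes> M \<noteq> \<one>"
      using xc Mc by (metis inv_closed inv_equality inv_inv)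
    then have "inv (inv x \<otimes> M) \<in> P" using cone_props(3)[OF pc, of "inv x \<otimes> M"] False xc Mc by auto
    then have p: "inv M \<otimes> x \<in> P" using xc Mc by (simp add: inv_mult_group)
    have "\<forall>t\<in>insert x F. t = x \<or> inv t \<otimes> x \<in> P"
    proof
      fix t assume t: "t \<in> insert x F"
      show "t = x \<or> inv t \<otimes> x \<in> P"
      proof (cases "t = x \<or> t = M")
        case True then show ?thesis using p by auto
      next
        case False
        then have "inv t \<otimes> M \<in> P" "t \<in> carrier G" using M t insert by auto
        then have "(inv t \<otimes> M) \<otimes> (inv M \<otimes> x) \<in> P" using p cone_props(2)[OF pc] by blast
        then show ?thesis using \<open>t \<in> carrier G\<close> xc Mc by (simp add: m_assoc[symmetric])
           (simp add: m_assoc)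
      qed
    qed
    then show ?thesis by blast
  qed
qed

lemma order_contra:
  assumes pc: "positive_cone G P" and T: "finite T" "T \<subseteq> carrier G"
    and g: "g \<in> carrier G" "g \<noteq> \<one>"
    and Q: "\<forall>u\<in>carrier G. u \<noteq> \<one> \<longrightarrow> (\<exists>t\<in>T. u \<otimes> t \<in> P)"
  shows False
proof -
  obtain M where M: "M \<in> insert \<one> T" "\<forall>t\<in>insert \<one> T. t = M \<or> inv t \<otimes> M \<in> P"
    using cone_max[OF pc, of "insert \<one> T"] T by auto
  have Mc: "M \<in> carrier G" using M T by auto
  note PC = cone_props[OF pc]
  show False
  proof (cases "M = \<one>")
    case True
    obtain u where u: "u \<in> carrier G" "u \<noteq> \<one>" "inv u \<in> P"
      using PC(3)[OF g] g by (metis inv_closed inv_inv inv_eq_1_iff)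
    then obtain t where t: "t \<in> T" "u \<otimes> t \<in> P" using Q by auto
    have tc: "t \<in> carrier G" using t T by auto
    have "t = \<one> \<or> inv t \<in> P" using M True t tc by auto
    then show False
    proof
      assume "t = \<one>" then show False using t u PC(4) by auto
    next
      assume "inv t \<in> P"
      then have "(u \<otimes> t) \<otimes> inv t \<in> P" using t PC(2) by blast
      then have "u \<in> P" using u tc by (simp add: m_assoc)
      then show False using u PC(4) by blast
    qed
  next
    case False
    have MP: "M \<in> P" using M False Mc by auto
    have MM: "M \<otimes> M \<in> P" using PC(2) MP by blast
    have "inv (M \<otimes> M) \<noteq> \<one>" using MM PC(5) Mc by (metis inv_eq_1_iff m_closed)
    then obtain t where t: "t \<in> T" "inv (M \<otimes> M) \<otimes> t \<in> P" using Q Mc by (meson inv_closed m_closed)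
    have tc: "t \<in> carrier G" using t T by auto
    have "t = M \<or> inv t \<otimes> M \<in> P" using M t by auto
    then have "inv (M \<otimes> M) \<otimes> M \<in> P"
    proof
      assume "inv t \<otimes> M \<in> P"
      then have "(inv (M \<otimes> M) \<otimes> t) \<otimes> (inv t \<otimes> M) \<in> P" using t PC(2) by blast
      then show ?thesis using tc Mc by (simp add: m_assoc[symmetric]) (simp add: m_assoc)
    qed (use t in simp)
    then have "inv M \<in> P" using Mc by (simp add: inv_mult_group m_assoc)
    then show False using MP PC(4) by blast
  qed
qed

end


context group
begin

lemma comm_if_single:
  assumes SC: "S \<subseteq> carrier G" and gen: "generate G S = carrier G" and single: "\<And>a b. a \<in> S \<Longrightarrow> b \<in> S \<Longrightarrow> a = b"
  shows "comm_group G"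
proof -
  have lc: "lev a \<otimes> lev b = lev b \<otimes> lev a" if "snd a \<in> S" "snd b \<in> S" for a b
  proof -
    have "snd a = snd b" using single that by blast
    moreover have "snd a \<in> carrier G" using that SC by auto
    ultimately show ?thesis by (cases a, cases b) (auto simp: lev_def)
  qed
  have lw: "lev a \<otimes> word_eval G w = word_eval G w \<otimes> lev a" if "snd a \<in> S" "word_over S w" for a w
    using that(2)
  proof (induction w)
    case Nil then show ?case using that SC by auto
  next
    case (Cons b w)
    have "word_over (carrier G) w" using Cons.prems SC word_over_mono by (metis word_over_simps(2))
    then have c: "lev a \<in> carrier G" "lev b \<in> carrier G" "word_eval G w \<in> carrier G"
      using that Cons.prems SC by auto
    have "lev a \<otimes> word_eval G (b # w) = (lev a \<otimes> lev b) \<otimes> word_eval G w" using c by (simp add: m_assoc)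
    also have "\<dots> = lev b \<otimes> (lev a \<otimes> word_eval G w)" using lc[of a b] that Cons.prems c by (simp add: m_assoc)
    also have "\<dots> = lev b \<otimes> (word_eval G w \<otimes> lev a)" using Cons by simp
    also have "\<dots> = word_eval G (b # w) \<otimes> lev a" using c by (simp add: m_assoc)
    finally show ?case .
  qed
  have ww: "word_eval G w1 \<otimes> word_eval G w2 = word_eval G w2 \<otimes> word_eval G w1"
    if "word_over S w1" "word_over S w2" for w1 w2
    using that(1)
  proof (induction w1)
    case Nil
    have "word_over (carrier G) w2" using that(2) SC word_over_mono by blast
    then show ?case by simp
  next
    case (Cons b w)
    have "word_over (carrier G) w" "word_over (carrier G) w2" using Cons.prems that SC word_over_mono by (metis word_over_simps(2))+
    then have c: "lev b \<in> carrier G" "word_eval G w \<in> carrier G" "word_eval G w2 \<in> carrier G"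
      using that Cons.prems SC by auto
    have "word_eval G (b # w) \<otimes> word_eval G w2 = lev b \<otimes> (word_eval G w \<otimes> word_eval G w2)"
      using c by (simp add: m_assoc)
    also have "\<dots> = lev b \<otimes> (word_eval G w2 \<otimes> word_eval G w)" using Cons by simp
    also have "\<dots> = (lev b \<otimes> word_eval G w2) \<otimes> word_eval G w" using c by (simp add: m_assoc)
    also have "\<dots> = (word_eval G w2 \<otimes> lev b) \<otimes> word_eval G w" using lw[of b w2] Cons.prems that by simp
    also have "\<dots> = word_eval G w2 \<otimes> word_eval G (b # w)" using c by (simp add: m_assoc)
    finally show ?case .
  qed
  show ?thesis
  proof (rule group_comm_groupI)
    fix x y assume "x \<in> carrier G" "y \<in> carrier G"
    then obtain w1 w2 where "word_over S w1" "word_eval G w1 = x" "word_over S w2" "word_eval G w2 = y"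
      using words_exist[OF SC] gen by metis
    then show "x \<otimes> y = y \<otimes> x" using ww by blast
  qed
qed

lemma main_contra:
  assumes SC: "S \<subseteq> carrier G" and genS: "generate G S = carrier G"
    and free: "\<forall>w. word_over S w \<and> reduced_word w \<and> w \<noteq> [] \<longrightarrow> word_eval G w \<noteq> \<one>"
    and two: "s1 \<in> S" "s2 \<in> S" "s1 \<noteq> s2"
    and Gen: "finite Gen" "Gen \<subseteq> carrier G" "generate G Gen = carrier G"
    and pc: "positive_cone G P"
    and paths: "\<forall>a\<in>P. \<forall>b\<in>P. r_path_in G Gen r P a b"
  shows False
proof -
  note PC = cone_props[OF pc]
  have other: "\<exists>s'\<in>S. s' \<noteq> s" for s using two by metis
  have redex: "\<exists>U. red' U \<and> word_over S U \<and> word_eval G U = u" if "u \<in> carrier G" for u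
  proof -
    obtain w where "word_over S w" "word_eval G w = u" using words_exist[OF SC, of u] genS \<open>u \<in> carrier G\<close> by auto
    then show ?thesis using reduce_word[OF SC, of w] by auto
  qed
  define rd where "rd u = (SOME U. red' U \<and> word_over S U \<and> word_eval G U = u)" for u
  have rd: "red' (rd u) \<and> word_over S (rd u) \<and> word_eval G (rd u) = u" if "u \<in> carrier G" for u
    unfolding rd_def using someI_ex[OF redex[OF that]] .
  have ocS: "word_over (carrier G) w" if "word_over S w" for w using that SC word_over_mono by blast
  define Wr where "Wr = word_eval G ` {ws. set ws \<subseteq> UNIV \<times> Gen \<and> length ws \<le> r}"
  have fUG: "finite (UNIV \<times> Gen :: (bool \<times> 'a) set)" using Gen(1) by simp
  have "finite {ws :: (bool \<times> 'a) list. set ws \<subseteq> UNIV \<times> Gen \<and> length ws \<le> r}" using finite_lists_length_le[OF fUG, of r] by simp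
  then have fWr: "finite Wr" unfolding Wr_def by (rule finite_imageI)
  have Wrc: "Wr \<subseteq> carrier G"
  proof
    fix w assume "w \<in> Wr"
    then obtain ws where "set ws \<subseteq> UNIV \<times> Gen" "w = word_eval G ws" unfolding Wr_def by auto
    then have "word_over (carrier G) ws" using Gen(2) by (auto simp: word_over_def)
    then show "w \<in> carrier G" using \<open>w = _\<close> by simp
  qed
  define Ts where "Ts = (\<Union>w\<in>Wr. (\<lambda>k. inv (word_eval G (take k (rd w)))) ` {..length (rd w)})"
  have fTs: "finite Ts" unfolding Ts_def using fWr by auto
  have Tsc: "Ts \<subseteq> carrier G"
  proof
    fix t assume "t \<in> Ts"
    then obtain w k where "w \<in> Wr" "t = inv (word_eval G (take k (rd w)))" unfolding Ts_def by auto
    moreover have "word_over S (rd w)" using rd Wrc \<open>w \<in> Wr\<close> by auto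
    then have "word_over S (take k (rd w))" by (auto simp: word_over_def dest: in_set_takeD)
    then have "word_eval G (take k (rd w)) \<in> carrier G" using ocS by simp
    then show "t \<in> carrier G" using \<open>t = _\<close> by simp
  qed
  have s1c: "s1 \<in> carrier G" using two SC by auto
  have s1ne: "s1 \<noteq> \<one>"
    using free[rule_format, of "[(True, s1)]"] two s1c by (simp add: reduced_red' lev_def)
  have Q: "\<exists>t\<in>Ts. u \<otimes> t \<in> P" if u: "u \<in> carrier G" "u \<noteq> \<one>" for u
  proof -
    define U where "U = rd u"
    have U: "red' U" "word_over S U" "word_eval G U = u" using rd[OF u(1)] by (auto simp: U_def)
    have Une: "U \<noteq> []" using U u by auto
    define inC where "inC y \<longleftrightarrow> (\<exists>Z V. red' Z \<and> word_over S Z \<and> word_eval G Z = y \<and> Z = U @ V)" for y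
    obtain s where s: "s \<in> S" "s \<noteq> snd (last U)" using other by blast
    define Z1 where "Z1 = U @ [(True, s)] @ winv U"
    define Z2 where "Z2 = U @ [(False, s)] @ winv U"
    have rZ1: "red' Z1" unfolding Z1_def using U s Une
      by (simp add: red'_append red'_winv red'_Cons hd_winv) (auto simp: canc_def flip_def)
    have rZ2: "red' Z2" unfolding Z2_def using U s Une
      by (simp add: red'_append red'_winv red'_Cons hd_winv) (auto simp: canc_def flip_def)
    have oZ1: "word_over S Z1" "word_over S Z2" using U s by (auto simp: Z1_def Z2_def)
    have wZ: "winv Z1 = Z2" by (simp add: Z1_def Z2_def flip_def)
    have eZ2: "word_eval G Z2 = inv (word_eval G Z1)"
      using eval_winv[OF ocS[OF oZ1(1)]] wZ by simp
    have ne1: "word_eval G Z1 \<noteq> \<one>" using free rZ1 oZ1 by (auto simp: reduced_red' Z1_def)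
    have c1: "word_eval G Z1 \<in> carrier G" using ocS oZ1 by simp
    obtain p where p: "p \<in> P" "inC p"
    proof (cases "word_eval G Z1 \<in> P")
      case True
      then show ?thesis using that[of "word_eval G Z1"] rZ1 oZ1 unfolding inC_def Z1_def by blast
    next
      case False
      then have "word_eval G Z2 \<in> P" using PC(3)[OF c1 ne1] eZ2 by simp
      then show ?thesis using that[of "word_eval G Z2"] rZ2 oZ1 unfolding inC_def Z2_def by blast
    qed
    obtain s' where s': "s' \<in> S" "s' \<noteq> snd (hd U)" using other by blast
    have s'c: "s' \<in> carrier G" using s' SC by auto
    have s'ne: "s' \<noteq> \<one>"
      using free[rule_format, of "[(True, s')]"] s' s'c by (simp add: reduced_red' lev_def)
    obtain q where q: "q \<in> P" "\<not> inC q"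
    proof -
      obtain l where l: "snd l = s'" "word_eval G [l] \<in> P"
      proof (cases "s' \<in> P")
        case True then show ?thesis using that[of "(True, s')"] s'c by (simp add: lev_def)
      next
        case False then show ?thesis using that[of "(False, s')"] s'c PC(3)[OF s'c s'ne]
          by (simp add: lev_def)
      qed
      have "\<not> inC (word_eval G [l])"
      proof
        assume "inC (word_eval G [l])"
        then obtain Z V where Z: "red' Z" "word_over S Z" "word_eval G Z = word_eval G [l]" "Z = U @ V"
          unfolding inC_def by blast
        have "Z = [l]" using unique_red[OF SC free Z(1) _ Z(2) _ Z(3)] l s' by simp
        then have "hd U = l" using Z(4) Une by (cases U) auto
        then show False using l s' by simp
      qed
      then show ?thesis using that l by blast
    qed
    obtain ps where ps: "ps \<noteq> []" "hd ps = p" "last ps = q" "set ps \<subseteq> P"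
      "\<forall>i. Suc i < length ps \<longrightarrow> word_dist G Gen (ps ! i) (ps ! Suc i) \<le> r"
      using paths p q unfolding r_path_in_def by blast
    obtain i where i: "Suc i < length ps" "inC (ps ! i)" "\<not> inC (ps ! Suc i)"
      using first_exit[of ps "Collect inC"] ps p q by auto
    define x where "x = ps ! i"
    define y where "y = ps ! Suc i"
    have xP: "x \<in> P" "y \<in> P" using ps(4) i(1) by (auto simp: x_def y_def)
    have xc: "x \<in> carrier G" "y \<in> carrier G" using xP PC(1) by auto
    define w where "w = inv x \<otimes> y"
    have wc: "w \<in> carrier G" using xc by (simp add: w_def)
    have wl: "word_length G Gen w \<le> r" using ps(5) i(1) by (simp add: word_dist_def w_def x_def y_def)
    have "\<exists>n ws. length ws = n \<and> word_over Gen ws \<and> word_eval G ws = w"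
      using words_exist[OF Gen(2)] Gen(3) wc by metis
    then obtain ws where ws: "length ws = word_length G Gen w" "word_over Gen ws" "word_eval G ws = w"
      unfolding word_length_def using LeastI_ex[of "\<lambda>n. \<exists>ws. length ws = n \<and> word_over Gen ws \<and> word_eval G ws = w"]
      by blast
    have "set ws \<subseteq> UNIV \<times> Gen" using ws(2) by (auto simp: word_over_def)
    then have wWr: "w \<in> Wr" unfolding Wr_def using ws(1,3) wl by (intro image_eqI[of _ _ ws]) auto
    define W where "W = rd w"
    have W: "red' W" "word_over S W" "word_eval G W = w" using rd[OF wc] by (auto simp: W_def)
    obtain Zx V where Zx: "red' Zx" "word_over S Zx" "word_eval G Zx = x" "Zx = U @ V"
      using i(2) unfolding inC_def x_def by blast
    obtain X' T W' where cn: "Zx = X' @ T" "W = winv T @ W'" "red' (X' @ W')"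
      using cancellation[OF Zx(1) W(1)] by blast
    have o1: "word_over S (X' @ T)" using Zx(2) cn(1) by simp
    have o2: "word_over S (winv T @ W')" using W(2) cn(2) by simp
    have o3: "word_over S (U @ V)" using Zx(2) Zx(4) by simp
    have oX: "word_over S X'" "word_over S T" "word_over S W'" "word_over S V"
      using o1 o2 o3 by simp_all
    have yeq: "y = word_eval G X' \<otimes> word_eval G W'"
    proof -
      have "y = x \<otimes> w" using xc by (simp add: w_def m_assoc[symmetric])
      also have "\<dots> = (word_eval G X' \<otimes> word_eval G T) \<otimes> (inv (word_eval G T) \<otimes> word_eval G W')"
        using Zx(3) W(3) cn oX ocS by (simp add: eval_append eval_winv)
      also have "\<dots> = word_eval G X' \<otimes> word_eval G W'"
        using oX ocS by (simp add: m_assoc[symmetric]) (simp add: m_assoc)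
      finally show ?thesis .
    qed
    from Zx(4) cn(1) have "U @ V = X' @ T" by simp
    then obtain us where "(U = X' @ us \<and> us @ V = T) \<or> (U @ us = X' \<and> V = us @ T)"
      by (auto simp: append_eq_append_conv2)
    then show ?thesis
    proof
      assume h: "U @ us = X' \<and> V = us @ T"
      have "inC y" unfolding inC_def
        using cn(3) oX yeq h ocS by (intro exI[of _ "X' @ W'"] exI[of _ "us @ W'"]) (auto simp: eval_append)
      then show ?thesis using i(3) by (simp add: y_def)
    next
      assume h: "U = X' @ us \<and> us @ V = T"
      have Weq: "W = winv V @ (winv us @ W')" using cn(2) h by auto
      have Wt: "take (length V) W = winv V" by (subst Weq) simp
      have lV: "length V \<le> length W" by (subst Weq) simp
      define t where "t = word_eval G V"
      have "t = inv (word_eval G (take (length V) W))"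
        using Wt eval_winv[OF ocS[OF oX(4)]] ocS[OF oX(4)] by (simp add: t_def)
      then have "t \<in> Ts" unfolding Ts_def using wWr lV by (auto simp: W_def)
      moreover have "u \<otimes> t = x" using U(3) Zx(3,4) oX(4) U(2) ocS by (simp add: t_def eval_append)
      ultimately show ?thesis using xP by auto
    qed
  qed
  show False using order_contra[OF pc fTs Tsc s1c s1ne] Q by blast
qed

end

theorem corollary1p2:
  fixes G :: "('a, 'b) monoid_scheme" and Gen :: "'a set"
  assumes "free_group G"
    and "finitely_generated G"
    and "\<not> comm_group G"
    and "finite Gen" and "Gen \<subseteq> carrier G" and "generate G Gen = carrier G"
  shows "\<not> (\<exists>P. positive_cone G P \<and> coarsely_connected G Gen P)"
proof
  assume "\<exists>P. positive_cone G P \<and> coarsely_connected G Gen P"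
  then obtain P r where pc: "positive_cone G P" and paths: "\<forall>a\<in>P. \<forall>b\<in>P. r_path_in G Gen r P a b"
    unfolding coarsely_connected_def by blast
  have grp: "group G" using assms(1) by (simp add: free_group_def)
  obtain S where S: "free_basis G S" using assms(1) by (auto simp: free_group_def)
  have SC: "S \<subseteq> carrier G" and genS: "generate G S = carrier G"
    and free: "\<forall>w. word_over S w \<and> reduced_word w \<and> w \<noteq> [] \<longrightarrow> word_eval G w \<noteq> \<one>\<^bsub>G\<^esub>"
    using S by (auto simp: free_basis_def)
  have "\<exists>s1 s2. s1 \<in> S \<and> s2 \<in> S \<and> s1 \<noteq> s2"
  proof (rule ccontr)
    assume "\<not> ?thesis"
    then have "comm_group G" using group.comm_if_single[OF grp SC genS] by blast
    then show False using assms(3) by simp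
  qed
  then obtain s1 s2 where "s1 \<in> S" "s2 \<in> S" "s1 \<noteq> s2" by blast
  then show False
    using group.main_contra[OF grp SC genS free _ _ _ assms(4,5,6) pc paths] by blast
qed

end
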